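(* Let $E$ be a nonempty bounded subset of $M_a$ and $p\in E$. If $i\in\Lambda(E)$, then $p+\alpha e_i\in\mathrm{GS}(E,p)$ for all $\alpha\in\mathbb R$.
   Context: Let $a=\{a_i\}$ be a sequence of positive reals with $\sum_i a_i^2<\infty$, $M_a=\{x\in\mathbb{R}^{\mathbb N}:\sum_i a_i^2x_i^2<\infty\}$ with inner product $\langle x,y\rangle_a=\sum_i a_i^2x_iy_i$ and norm $\|x\|_a=\sqrt{\langle x,x\rangle_a}$ (a Hilbert space). $e_i$ denotes the sequence with $1$ in position $i$ and $0$ elsewhere. For nonempty $E\subset M_a$, $\Lambda(E)$ is the set of $i\in\mathbb N$ for which there exist $x\in E$ and $\alpha\in\mathbb R\setminus\{0\}$ with $x+\alpha e_i\in E$. The generalized linear span of $E$ with respect to $p\in E$ is $\mathrm{GS}(E,p)=\{p+\sum_i\alpha_i(x_i-p)\in M_a: x_i\in E,\ \alpha_i\in\mathbb R\}$, where the index $i$ runs over a finite or countably infinite subset of $\mathbb N$ and infinite sums are limits in $\|\cdot\|_a$ of their partial sums. *)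

theory Defs
  imports "HOL-Analysis.Analysis"
begin

definition Ma :: "(nat \<Rightarrow> real) \<Rightarrow> (nat \<Rightarrow> real) set" where
  "Ma a = {x. summable (\<lambda>i. (a i)\<^sup>2 * (x i)\<^sup>2)}"

definition inner_a :: "(nat \<Rightarrow> real) \<Rightarrow> (nat \<Rightarrow> real) \<Rightarrow> (nat \<Rightarrow> real) \<Rightarrow> real" where
  "inner_a a x y = (\<Sum>i. (a i)\<^sup>2 * x i * y i)"

definition norm_a :: "(nat \<Rightarrow> real) \<Rightarrow> (nat \<Rightarrow> real) \<Rightarrow> real" where
  "norm_a a x = sqrt (inner_a a x x)"

definition unit_seq :: "nat \<Rightarrow> nat \<Rightarrow> real" ("\<ee>") where
  "unit_seq i = (\<lambda>j. if j = i then 1 else 0)"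

definition bounded_a :: "(nat \<Rightarrow> real) \<Rightarrow> (nat \<Rightarrow> real) set \<Rightarrow> bool" where
  "bounded_a a E \<longleftrightarrow> (\<exists>C. \<forall>x\<in>E. norm_a a x \<le> C)"

definition Lambda_set :: "(nat \<Rightarrow> real) set \<Rightarrow> nat set" where
  "Lambda_set E = {i. \<exists>x\<in>E. \<exists>\<alpha>::real. \<alpha> \<noteq> 0 \<and> (\<lambda>j. x j + \<alpha> * \<ee> i j) \<in> E}"

text \<open>A finite index set is w.l.o.g. {..<n}; a countably
  infinite index set is enumerated increasingly, i.e. indexed by nat, and the infinite
  sum is the limit in norm_a of the partial sums.\<close>
definition gen_span :: "(nat \<Rightarrow> real) \<Rightarrow> (nat \<Rightarrow> real) set \<Rightarrow> (nat \<Rightarrow> real) \<Rightarrow> (nat \<Rightarrow> real) set" where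
  "gen_span a E p = {y \<in> Ma a.
     (\<exists>(n::nat) xs \<alpha>s. (\<forall>k<n. xs k \<in> E) \<and> y = (\<lambda>j. p j + (\<Sum>k<n. \<alpha>s k * (xs k j - p j))))
   \<or> (\<exists>xs \<alpha>s. (\<forall>k::nat. xs k \<in> E) \<and>
        (\<lambda>n. norm_a a (\<lambda>j. p j + (\<Sum>k<n. \<alpha>s k * (xs k j - p j)) - y j)) \<longlonglongrightarrow> 0)}"

end

theory Submission
  imports Defs
begin

theorem lemma3p3:
  fixes a :: "nat \<Rightarrow> real" and E :: "(nat \<Rightarrow> real) set" and p :: "nat \<Rightarrow> real" and i :: nat
  assumes a_pos: "\<And>j. a j > 0"
    and a_sq: "summable (\<lambda>j. (a j)\<^sup>2)"
    and E_sub: "E \<subseteq> Ma a"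
    and E_ne: "E \<noteq> {}"
    and E_bdd: "bounded_a a E"
    and p_in: "p \<in> E"
    and i_in: "i \<in> Lambda_set E"
  shows "\<forall>\<alpha>::real. (\<lambda>j. p j + \<alpha> * \<ee> i j) \<in> gen_span a E p"
proof
  fix \<alpha> :: real
  obtain x \<beta> where x: "x \<in> E" and b: "\<beta> \<noteq> 0" and xb: "(\<lambda>j. x j + \<beta> * \<ee> i j) \<in> E"
    using i_in unfolding Lambda_set_def by blast
  have pM: "summable (\<lambda>j. (a j)\<^sup>2 * (p j)\<^sup>2)" using p_in E_sub unfolding Ma_def by blast
  have ev: "eventually (\<lambda>j. (a j)\<^sup>2 * (p j + \<alpha> * \<ee> i j)\<^sup>2 = (a j)\<^sup>2 * (p j)\<^sup>2) sequentially"
    unfolding eventually_sequentially by (rule exI[of _ "Suc i"]) (auto simp: unit_seq_def)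
  have M: "(\<lambda>j. p j + \<alpha> * \<ee> i j) \<in> Ma a"
    unfolding Ma_def using summable_cong[OF ev] pM by simp
  define xs where "xs = (\<lambda>k::nat. if k = 0 then (\<lambda>j. x j + \<beta> * \<ee> i j) else x)"
  define as where "as = (\<lambda>k::nat. if k = 0 then \<alpha> / \<beta> else - \<alpha> / \<beta>)"
  have xsE: "\<forall>k<2. xs k \<in> E" using x xb by (simp add: xs_def)
  have eq: "(\<lambda>j. p j + \<alpha> * \<ee> i j) = (\<lambda>j. p j + (\<Sum>k<2. as k * (xs k j - p j)))"
  proof
    fix j
    have "(\<Sum>k<(2::nat). as k * (xs k j - p j)) = as 0 * (xs 0 j - p j) + as 1 * (xs 1 j - p j)"
      by (simp add: numeral_2_eq_2)
    also have "\<dots> = \<alpha> * \<ee> i j" using b by (simp add: as_def xs_def field_simps)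
    finally show "p j + \<alpha> * \<ee> i j = p j + (\<Sum>k<2. as k * (xs k j - p j))" by simp
  qed
  show "(\<lambda>j. p j + \<alpha> * \<ee> i j) \<in> gen_span a E p"
    unfolding gen_span_def using M xsE eq by blast
qed

end
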